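(* The category $\mathcal{C}$ does not have duals for objects.
   Context: $\mathcal{C}$ is the monoidal category whose objects are finite ordered subsets of $\mathbb{N}$ (possibly with repetitions), with monoidal product union and unit $\emptyset$, whose morphisms are complex matrices with rows and columns labeled by the two objects (composition being matrix product along the common label set, monoidal product of morphisms being direct sum). A monoidal category has duals for objects if every object $A$ has a dual object $A^*$ together with evaluation $e_A:A\otimes A^*\to\mathds{1}$ and coevaluation $i_A:\mathds{1}\to A^*\otimes A$ morphisms satisfying the usual adjunction (zig-zag) identities. Here, via the functor $\operatorname{sDet}$ (which sends a matrix $X$ with row labels $R$, column labels $S$ to $\sum_{I\subseteq R,J\subseteq S}\det(X_{I,J})|I\rangle\langle J|$ on tensor products of copies of $\mathbb{C}^2$), the evaluation for a single wire would have to correspond to the vector $|00\rangle+|11\rangle$. *)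

theory Defs
  imports Complex_Main "Jordan_Normal_Form.Matrix"
begin

text \<open>A morphism S \<rightarrow> R is a complex matrix whose rows are
  labelled by (the positions of) R and whose columns by (the positions of) S.\<close>

type_synonym obj = "nat list"
type_synonym morph = "complex mat"

definition C_hom :: "obj \<Rightarrow> obj \<Rightarrow> morph set" where
  "C_hom S R = carrier_mat (length R) (length S)"

definition C_id :: "obj \<Rightarrow> morph" where
  "C_id A = 1\<^sub>m (length A)"

definition C_comp :: "morph \<Rightarrow> morph \<Rightarrow> morph" where
  "C_comp g f = g * f"

definition C_unit :: obj where
  "C_unit = []"

definition C_tensor_obj :: "obj \<Rightarrow> obj \<Rightarrow> obj" where
  "C_tensor_obj A B = A @ B"

definition C_tensor :: "morph \<Rightarrow> morph \<Rightarrow> morph" where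
  "C_tensor f g = four_block_mat f (0\<^sub>m (dim_row f) (dim_col g))
                                   (0\<^sub>m (dim_row g) (dim_col f)) g"

text \<open>Duals for objects (strict monoidal category, so associators and unitors
  are identities): every A has A*, e_A : A \<otimes> A* \<rightarrow> 1, i_A : 1 \<rightarrow> A* \<otimes> A
  satisfying the two zig-zag identities.\<close>

definition C_has_duals :: bool where
  "C_has_duals \<longleftrightarrow>
    (\<forall>A. \<exists>Ad e i.
        e \<in> C_hom (C_tensor_obj A Ad) C_unit \<and>
        i \<in> C_hom C_unit (C_tensor_obj Ad A) \<and>
        C_comp (C_tensor e (C_id A)) (C_tensor (C_id A) i) = C_id A \<and>
        C_comp (C_tensor (C_id Ad) e) (C_tensor i (C_id Ad)) = C_id Ad)"

end

theory Submission
  imports Defs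
begin

theorem mainTheorem6:
  shows "\<not> C_has_duals"
proof
  assume "C_has_duals"
  then obtain Ad e i where
    e: "e \<in> C_hom (C_tensor_obj [0] Ad) C_unit" and
    i: "i \<in> C_hom C_unit (C_tensor_obj Ad [0])" and
    z: "C_comp (C_tensor e (C_id [0])) (C_tensor (C_id [0]) i) = C_id [0]"
    unfolding C_has_duals_def by blast
  define m where "m = length Ad"
  have ed: "dim_row e = 0" "dim_col e = Suc m"
    using e by (auto simp: C_hom_def C_tensor_obj_def C_unit_def m_def)
  have id: "dim_row i = Suc m" "dim_col i = 0"
    using i by (auto simp: C_hom_def C_tensor_obj_def C_unit_def m_def)
  define A where "A = C_tensor e (C_id [0])"
  define B where "B = C_tensor (C_id [0]) i"
  have Ad: "dim_row A = 1" "dim_col A = Suc (Suc m)"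
    using ed by (auto simp: A_def C_tensor_def C_id_def)
  have Bd: "dim_row B = Suc (Suc m)" "dim_col B = 1"
    using id by (auto simp: B_def C_tensor_def C_id_def)
  have Aent: "\<And>k. k < Suc (Suc m) \<Longrightarrow> A $$ (0, k) = (if k < Suc m then 0 else 1)"
    using ed by (auto simp: A_def C_tensor_def C_id_def)
  have Bent: "\<And>k. k < Suc (Suc m) \<Longrightarrow> B $$ (k, 0) = (if k = 0 then 1 else 0)"
    using id by (auto simp: B_def C_tensor_def C_id_def)
  have "(A * B) $$ (0,0) = (\<Sum>k<Suc (Suc m). A $$ (0,k) * B $$ (k,0))"
    using Ad Bd by (simp add: scalar_prod_def row_def col_def atLeast0LessThan)
  also have "\<dots> = 0"
    by (rule sum.neutral) (auto simp: Aent Bent)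
  finally have "(A * B) $$ (0,0) = 0" .
  moreover have "(A * B) $$ (0,0) = 1"
    using z by (simp add: A_def B_def C_comp_def C_id_def)
  ultimately show False by simp
qed

end
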